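(* For all integers $n\ge1$ and $0\le i\le n-1$, the simplicial shelling components satisfy $$\Theta(\check{\Phi}_{n,i})=q^{i}\cdot[2(n-i)]\cdot[n-1]!.$$
   Context: $\mathbf{a},\mathbf{b}$ are non-commuting variables and $\mathbf{c}=\mathbf{a}+\mathbf{b}$. For a graded poset $P$ of rank $m+1$ with minimum $\hat0$, maximum $\hat1$ and rank function $\rho$, its $\mathbf{a}\mathbf{b}$-index is $\Psi(P)=\sum_{S\subseteq\{1,\dots,m\}} f_S\, v_S$, where for $S=\{s_1<\cdots<s_k\}$, $f_S$ is the number of chains $\hat0<x_1<\cdots<x_k<\hat1$ with $\rho(x_i)=s_i$, and $v_S=v_1\cdots v_m$ with $v_i=\mathbf{b}$ if $i\in S$, $v_i=\mathbf{a}-\mathbf{b}$ otherwise. $B_n$ is the Boolean algebra of rank $n$. $G$ is the derivation of $\mathbb{Z}\langle\mathbf{a},\mathbf{b}\rangle$ with $G(1)=0$, $G(\mathbf{a})=\mathbf{b}\mathbf{a}$, $G(\mathbf{b})=\mathbf{a}\mathbf{b}$. The simplicial shelling components are defined by $\check{\Phi}_{n,0}=\Psi(B_n)\cdot\mathbf{c}$ for $n\ge1$ and $\check{\Phi}_{n,i}=G(\check{\Phi}_{n-1,i-1})$ for $1\le i\le n-1$. The Major MacMahon map $\Theta:\mathbb{Z}\langle\mathbf{a},\mathbf{b}\rangle\to\mathbb{Z}[q]$ is linear with $\Theta(u_1\cdots u_n)=\prod_{i:\,u_i=\mathbf{b}}q^i$ on monomials. $[m]=1+q+\cdots+q^{m-1}$,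 $[m]!=[m]\cdots[1]$, $[0]!=1$. *)

theory Defs
  imports "HOL-Computational_Algebra.Polynomial"
begin

datatype letter = La | Lb

type_synonym word = "letter list"

text \<open>An element of Z<a,b> is represented as a formal sum (list of coefficient/monomial
pairs); the element it denotes is the sum of the terms.\<close>
type_synonym ncpoly = "(int \<times> word) list"

definition nc_one :: ncpoly where "nc_one = [(1, [])]"
definition nc_a :: ncpoly where "nc_a = [(1, [La])]"
definition nc_b :: ncpoly where "nc_b = [(1, [Lb])]"
definition nc_add :: "ncpoly \<Rightarrow> ncpoly \<Rightarrow> ncpoly" where "nc_add p q = p @ q"
definition nc_smult :: "int \<Rightarrow> ncpoly \<Rightarrow> ncpoly" where
  "nc_smult c p = map (\<lambda>(d, w). (c * d, w)) p"
definition nc_minus :: "ncpoly \<Rightarrow> ncpoly \<Rightarrow> ncpoly" where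
  "nc_minus p q = p @ nc_smult (-1) q"
definition nc_mult :: "ncpoly \<Rightarrow> ncpoly \<Rightarrow> ncpoly" where
  "nc_mult p q = [(c * d, u @ v). (c, u) \<leftarrow> p, (d, v) \<leftarrow> q]"
definition nc_prod :: "ncpoly list \<Rightarrow> ncpoly" where
  "nc_prod ps = foldr nc_mult ps nc_one"

definition nc_c :: ncpoly where "nc_c = nc_add nc_a nc_b"

fun G_letter :: "letter \<Rightarrow> word" where
  "G_letter La = [Lb, La]"
| "G_letter Lb = [La, Lb]"

definition G_word :: "word \<Rightarrow> ncpoly" where
  "G_word w = [(1, take i w @ G_letter (w ! i) @ drop (Suc i) w). i \<leftarrow> [0..<length w]]"

definition G :: "ncpoly \<Rightarrow> ncpoly" where
  "G p = concat (map (\<lambda>(c, w). nc_smult c (G_word w)) p)"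

text \<open>B_n = subsets of {1..n} ordered by inclusion, rank = cardinality.
  For S = {s_1 < ... < s_k} (given as increasing list ss), f_S counts chains
  {} < x_1 < ... < x_k < {1..n} with card x_j = s_j.\<close>
definition flag_count_B :: "nat \<Rightarrow> nat list \<Rightarrow> nat" where
  "flag_count_B n ss = card {xs :: nat set list. length xs = length ss \<and>
      (\<forall>j < length ss. {} \<subset> xs ! j \<and> xs ! j \<subset> {1..n} \<and> card (xs ! j) = ss ! j) \<and>
      (\<forall>j. Suc j < length ss \<longrightarrow> xs ! j \<subset> xs ! Suc j)}"

definition v_word :: "nat \<Rightarrow> nat list \<Rightarrow> ncpoly" where
  "v_word m ss = nc_prod (map (\<lambda>i. if i \<in> set ss then nc_b else nc_minus nc_a nc_b) [1..<Suc m])"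

text \<open>Sum over all S \<subseteq> {1..n-1}; subseqs [1..<n] lists each subset once, as an increasing list.\<close>
definition Psi_B :: "nat \<Rightarrow> ncpoly" where
  "Psi_B n = concat (map (\<lambda>ss. nc_smult (int (flag_count_B n ss)) (v_word (n - 1) ss))
                          (subseqs [1..<n]))"

fun Phi_check :: "nat \<Rightarrow> nat \<Rightarrow> ncpoly" where
  "Phi_check n 0 = nc_mult (Psi_B n) nc_c"
| "Phi_check 0 (Suc i) = []"   (* not used: only 1 \<le> i \<le> n-1 is meaningful *)
| "Phi_check (Suc n) (Suc i) = G (Phi_check n i)"

definition Theta_word :: "word \<Rightarrow> int poly" where
  "Theta_word w = (\<Prod>i\<in>{i. i < length w \<and> w ! i = Lb}. monom 1 (Suc i))"

definition Theta :: "ncpoly \<Rightarrow> int poly" where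
  "Theta p = (\<Sum>(c, w) \<leftarrow> p. smult c (Theta_word w))"

definition qint :: "nat \<Rightarrow> int poly" where
  "qint m = (\<Sum>j<m. monom 1 j)"

definition qfact :: "nat \<Rightarrow> int poly" where
  "qfact m = (\<Prod>j=1..m. qint j)"

end

theory Submission imports Defs begin


definition qq :: "int poly" where "qq = monom 1 1"

lemma monom_qq: "monom (1::int) n = qq ^ n"
  by (simp add: qq_def monom_power)

fun tw :: "nat \<Rightarrow> word \<Rightarrow> int poly" where
  "tw k [] = 1"
| "tw k (x # w) = (if x = Lb then qq ^ Suc k else 1) * tw (Suc k) w"

lemma tw_prod: "(\<Prod>i\<in>{i. i < length w \<and> w ! i = Lb}. qq ^ Suc (k + i)) = tw k w"
proof (induction w arbitrary: k)
  case Nil then show ?case by simp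
next
  case (Cons x w)
  have e: "{i. i < length (x#w) \<and> (x#w) ! i = Lb} = {i\<in>{..<Suc (length w)}. (x#w) ! i = Lb}" by auto
  have e2: "{i. i < length w \<and> w ! i = Lb} = {i\<in>{..<length w}. w ! i = Lb}" by auto
  have "(\<Prod>i\<in>{i. i < length (x#w) \<and> (x#w) ! i = Lb}. qq ^ Suc (k + i))
      = (\<Prod>i<Suc (length w). if (x#w) ! i = Lb then qq ^ Suc (k + i) else 1)"
    unfolding e by (rule prod.inter_filter) simp
  also have "\<dots> = (if x = Lb then qq ^ Suc k else 1) *
      (\<Prod>i<length w. if w ! i = Lb then qq ^ Suc (Suc k + i) else 1)"
    by (subst prod.lessThan_Suc_shift) (auto simp del: power_Suc intro!: prod.cong)
  also have "(\<Prod>i<length w. if w ! i = Lb then qq ^ Suc (Suc k + i) else 1) = tw (Suc k) w"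
    using Cons.IH[of "Suc k"] unfolding e2 by (simp only: prod.inter_filter[OF finite_lessThan])
  finally show ?case by simp
qed

lemma Theta_word_tw: "Theta_word w = tw 0 w"
  using tw_prod[where w=w and k=0] by (simp add: Theta_word_def monom_qq)

lemma tw_append: "tw k (u @ v) = tw k u * tw (k + length u) v"
  by (induction u arbitrary: k) (simp_all add: mult.assoc)

definition nbl :: "word \<Rightarrow> nat" where "nbl w = length (filter (\<lambda>x. x = Lb) w)"
definition nal :: "word \<Rightarrow> nat" where "nal w = length (filter (\<lambda>x. x = La) w)"

lemma tw_Suc: "tw (Suc k) w = qq ^ nbl w * tw k w"
  by (induction w arbitrary: k) (auto simp: nbl_def power_add algebra_simps)

definition ThK :: "nat \<Rightarrow> ncpoly \<Rightarrow> int poly" where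
  "ThK k p = (\<Sum>(c, w) \<leftarrow> p. smult c (tw k w))"

lemma Theta_ThK: "Theta p = ThK 0 p"
  unfolding Theta_def ThK_def by (simp add: Theta_word_tw)

lemma ThK_Nil[simp]: "ThK k [] = 0" by (simp add: ThK_def)
lemma ThK_Cons[simp]: "ThK k ((c,w) # p) = smult c (tw k w) + ThK k p" by (simp add: ThK_def)
lemma ThK_append[simp]: "ThK k (p @ r) = ThK k p + ThK k r" by (simp add: ThK_def)
lemma ThK_concat: "ThK k (concat ps) = (\<Sum>p\<leftarrow>ps. ThK k p)"
  by (induction ps) simp_all
lemma ThK_smult: "ThK k (nc_smult c p) = smult c (ThK k p)"
  by (induction p) (auto simp: nc_smult_def smult_add_right)

definition hom :: "nat \<Rightarrow> ncpoly \<Rightarrow> bool" where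
  "hom m p \<longleftrightarrow> (\<forall>x\<in>set p. length (snd x) = m)"

lemma ThK_mult_single: "ThK k (map (\<lambda>(d, v). (c * d, u @ v)) r) = smult c (tw k u) * ThK (k + length u) r"
  by (induction r) (auto simp: tw_append algebra_simps smult_add_right)

lemma nc_mult_Cons: "nc_mult ((c,u) # p) r = map (\<lambda>(d, v). (c * d, u @ v)) r @ nc_mult p r"
  unfolding nc_mult_def by (induction r) auto

lemma ThK_mult: "hom m p \<Longrightarrow> ThK k (nc_mult p r) = ThK k p * ThK (k + m) r"
proof (induction p)
  case Nil then show ?case by (simp add: nc_mult_def)
next
  case (Cons x p)
  obtain c u where x: "x = (c,u)" by (cases x)
  from Cons.prems have "hom m p" "length u = m" by (auto simp: hom_def x)
  then show ?case using Cons.IH by (simp only: x nc_mult_Cons ThK_append ThK_mult_single ThK_Cons) (simp add: algebra_simps)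
qed

lemma hom_append[simp]: "hom m (p @ r) \<longleftrightarrow> hom m p \<and> hom m r" by (auto simp: hom_def)
lemma hom_concat: "(\<And>p. p \<in> set ps \<Longrightarrow> hom m p) \<Longrightarrow> hom m (concat ps)"
  by (auto simp: hom_def)
lemma hom_smult: "hom m p \<Longrightarrow> hom m (nc_smult c p)"
  by (auto simp: hom_def nc_smult_def)
lemma hom_mult: "hom m p \<Longrightarrow> hom k r \<Longrightarrow> hom (m + k) (nc_mult p r)"
  unfolding hom_def nc_mult_def by (auto split: prod.splits) (metis snd_conv)+



definition GS :: "nat \<Rightarrow> word \<Rightarrow> int poly" where
  "GS k w = (\<Sum>i<length w. tw k (take i w @ G_letter (w ! i) @ drop (Suc i) w))"

lemma GS_Cons: "GS k (x # w) = tw k (G_letter x @ w) + (if x = Lb then qq ^ Suc k else 1) * GS (Suc k) w"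
  unfolding GS_def length_Cons sum.lessThan_Suc_shift by (simp add: sum_distrib_left)

lemma GS_closed: "GS k w = tw k w * ((\<Sum>j<nbl w. qq ^ Suc j) + qq ^ (k + nbl w + 1) * (\<Sum>j<nal w. qq ^ j))"
proof (induction w arbitrary: k)
  case Nil then show ?case by (simp add: GS_def nbl_def nal_def)
next
  case (Cons x w)
  show ?case
  proof (cases x)
    case La
    have "GS k (x # w) = qq ^ Suc k * tw (Suc (Suc k)) w + GS (Suc k) w"
      using La by (simp add: GS_Cons )
    also have "\<dots> = qq ^ nbl w * tw k w * ((\<Sum>j<nbl w. qq ^ Suc j) + qq ^ (k + nbl w + 1) * (\<Sum>j<Suc (nal w). qq ^ j))"
      unfolding Cons.IH tw_Suc sum.lessThan_Suc_shift
      by (simp add: algebra_simps power_add sum_distrib_left )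
    finally show ?thesis using La by (simp add: nbl_def nal_def tw_Suc )
  next
    case Lb
    have "GS k (x # w) = qq ^ Suc (Suc k) * tw (Suc (Suc k)) w + qq ^ Suc k * GS (Suc k) w"
      using Lb by (simp add: GS_Cons )
    also have "\<dots> = qq ^ Suc k * (qq ^ nbl w * tw k w) * ((\<Sum>j<Suc (nbl w). qq ^ Suc j) + qq ^ (k + Suc (nbl w) + 1) * (\<Sum>j<nal w. qq ^ j))"
      unfolding Cons.IH tw_Suc sum.lessThan_Suc
      by (simp add: algebra_simps power_add sum_distrib_left )
    finally show ?thesis using Lb by (simp add: nbl_def nal_def tw_Suc )
  qed
qed

lemma nbl_nal: "nbl w + nal w = length w"
proof (induction w)
  case (Cons x w) then show ?case by (cases x) (auto simp: nbl_def nal_def)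
qed (simp add: nbl_def nal_def)

lemma geo_split: "(\<Sum>j<r. qq ^ Suc j) + qq ^ (r + 1) * (\<Sum>j<a. qq ^ j) = qq * (\<Sum>j<r + a. qq ^ j)"
  by (induction a) (simp_all add: algebra_simps power_add sum_distrib_left)

lemma qint_qq: "qint m = (\<Sum>j<m. qq ^ j)"
  by (simp add: qint_def monom_qq)

lemma GS0: "GS 0 w = qq * qint (length w) * tw 0 w"
  unfolding GS_closed qint_qq using geo_split[of "nbl w" "nal w"] nbl_nal[of w] by (simp add: algebra_simps)

lemma ThK_G_word: "ThK 0 (G_word w) = GS 0 w"
  unfolding G_word_def GS_def ThK_def
  by (simp add: interv_sum_list_conv_sum_set_nat atLeast0LessThan comp_def)

lemma ThK_G: "hom m p \<Longrightarrow> ThK 0 (G p) = qq * qint m * ThK 0 p"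
proof (induction p)
  case Nil then show ?case by (simp add: G_def)
next
  case (Cons x p)
  obtain c u where x: "x = (c,u)" by (cases x)
  from Cons.prems have "hom m p" "length u = m" by (auto simp: hom_def x)
  then show ?case using Cons.IH
    by (simp add: x G_def ThK_smult ThK_G_word GS0 algebra_simps smult_add_right)
qed

lemma G_letter_len: "length (G_letter x) = 2" by (cases x) auto

lemma hom_G_word: "hom (Suc (length w)) (G_word w)"
  unfolding hom_def G_word_def by (auto simp: G_letter_len)

lemma hom_G: "hom m p \<Longrightarrow> hom (Suc m) (G p)"
proof (induction p)
  case Nil then show ?case by (simp add: G_def hom_def)
next
  case (Cons x p)
  obtain c u where x: "x = (c,u)" by (cases x)
  from Cons.prems have "hom m p" "length u = m" by (auto simp: hom_def x)
  then have "hom (Suc m) (nc_smult c (G_word u))" "hom (Suc m) (G p)"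
    using hom_smult hom_G_word Cons.IH by auto
  then show ?case by (simp add: x G_def)
qed



lemma ThK_b: "ThK k nc_b = qq ^ Suc k" by (simp add: nc_b_def)
lemma ThK_amb: "ThK k (nc_minus nc_a nc_b) = 1 - qq ^ Suc k"
  by (simp add: nc_minus_def nc_a_def nc_b_def nc_smult_def)
lemma ThK_c: "ThK k nc_c = 1 + qq ^ Suc k" by (simp add: nc_c_def nc_add_def nc_a_def nc_b_def)
lemma ThK_one: "ThK k nc_one = 1" by (simp add: nc_one_def)

lemma hom_b: "hom 1 nc_b" by (simp add: hom_def nc_b_def)
lemma hom_amb: "hom 1 (nc_minus nc_a nc_b)" by (simp add: hom_def nc_minus_def nc_a_def nc_b_def nc_smult_def)
lemma hom_c: "hom 1 nc_c" by (simp add: hom_def nc_c_def nc_add_def nc_a_def nc_b_def)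

lemma nc_prod_props: "(\<forall>x\<in>set ps. hom 1 x) \<Longrightarrow>
   hom (length ps) (nc_prod ps) \<and> ThK k (nc_prod ps) = (\<Prod>j<length ps. ThK (k + j) (ps ! j))"
proof (induction ps arbitrary: k)
  case Nil then show ?case by (simp add: nc_prod_def nc_one_def hom_def)
next
  case (Cons x ps)
  have h: "hom 1 x" using Cons.prems by simp
  have IH: "hom (length ps) (nc_prod ps)" "ThK (Suc k) (nc_prod ps) = (\<Prod>j<length ps. ThK (Suc k + j) (ps ! j))"
    using Cons by auto
  have "nc_prod (x # ps) = nc_mult x (nc_prod ps)" by (simp add: nc_prod_def)
  moreover have "hom (length (x # ps)) (nc_mult x (nc_prod ps))" using hom_mult[OF h IH(1)] by simp
  moreover have "ThK k (nc_mult x (nc_prod ps)) = (\<Prod>j<length (x#ps). ThK (k + j) ((x#ps) ! j))"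
    using ThK_mult[OF h, of k "nc_prod ps"] IH(2)
    unfolding length_Cons prod.lessThan_Suc_shift by simp
  ultimately show ?case by simp
qed

definition W :: "nat \<Rightarrow> nat list \<Rightarrow> int poly" where
  "W m ss = (\<Prod>j<m. if Suc j \<in> set ss then qq ^ Suc j else 1 - qq ^ Suc j)"

lemma v_word_props: "hom m (v_word m ss) \<and> ThK 0 (v_word m ss) = W m ss"
proof -
  let ?ps = "map (\<lambda>i. if i \<in> set ss then nc_b else nc_minus nc_a nc_b) [1..<Suc m]"
  have h1: "\<forall>x\<in>set ?ps. hom 1 x" using hom_b hom_amb by auto
  have l: "length ?ps = m" by simp
  have n: "\<And>j. j < m \<Longrightarrow> ThK j (?ps ! j) = (if Suc j \<in> set ss then qq ^ Suc j else 1 - qq ^ Suc j)"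
    by (simp del: upt_Suc add: ThK_b ThK_amb)
  from nc_prod_props[OF h1, of 0] show ?thesis
    unfolding v_word_def W_def l using n by (simp del: upt_Suc)
qed

lemma smult_nat: "smult (int n) p = of_nat n * p"
  by (simp add: of_nat_poly)

lemma Psi_props: "hom (n - 1) (Psi_B n) \<and>
  ThK 0 (Psi_B n) = (\<Sum>ss\<leftarrow>subseqs [1..<n]. of_nat (flag_count_B n ss) * W (n - 1) ss)"
proof -
  have "hom (n - 1) (Psi_B n)" unfolding Psi_B_def
    by (rule hom_concat) (auto intro: hom_smult simp: v_word_props)
  moreover have "ThK 0 (Psi_B n) = (\<Sum>ss\<leftarrow>subseqs [1..<n]. of_nat (flag_count_B n ss) * W (n - 1) ss)"
    unfolding Psi_B_def ThK_concat by (simp add: ThK_smult v_word_props comp_def smult_nat)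
  ultimately show ?thesis by simp
qed



definition chs :: "nat set \<Rightarrow> nat list \<Rightarrow> nat set list set" where
  "chs A ss = {xs :: nat set list. length xs = length ss \<and>
      (\<forall>j < length ss. {} \<subset> xs ! j \<and> xs ! j \<subset> A \<and> card (xs ! j) = ss ! j) \<and>
      (\<forall>j. Suc j < length ss \<longrightarrow> xs ! j \<subset> xs ! Suc j)}"

fun fc :: "nat \<Rightarrow> nat list \<Rightarrow> nat" where
  "fc N [] = 1"
| "fc N (t # ts) = (if 0 < t \<and> t < N then (N choose t) * fc t ts else 0)"

lemma flag_chs: "flag_count_B n ss = card (chs {1..n} ss)"
  by (simp add: flag_count_B_def chs_def)

lemma chain_trans:
  assumes "\<forall>j. Suc j < L \<longrightarrow> xs ! j \<subset> xs ! Suc j" "j < k" "k < L"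
  shows "xs ! j \<subset> xs ! k"
  using assms(2,3)
proof (induction k)
  case 0 then show ?case by simp
next
  case (Suc k)
  show ?case
  proof (cases "j = k")
    case True then show ?thesis using assms(1) Suc.prems by auto
  next
    case False
    then have "xs ! j \<subset> xs ! k" using Suc by auto
    then show ?thesis using assms(1) Suc.prems by (meson psubset_trans)
  qed
qed

lemma chs_finite: "finite A \<Longrightarrow> finite (chs A ss)"
proof -
  assume "finite A"
  have "chs A ss \<subseteq> {xs. set xs \<subseteq> Pow A \<and> length xs = length ss}"
    unfolding chs_def by (auto simp: in_set_conv_nth) (metis psubsetD)
  moreover have "finite {xs. set xs \<subseteq> Pow A \<and> length xs = length ss}"
    using \<open>finite A\<close> by (intro finite_lists_length_eq) simp
  ultimately show ?thesis by (rule finite_subset)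
qed

lemma chs_snoc_empty:
  assumes "finite A" "\<not> (0 < t \<and> t < card A)"
  shows "chs A (ss @ [t]) = {}"
proof (rule ccontr)
  assume "chs A (ss @ [t]) \<noteq> {}"
  then obtain xs where xs: "xs \<in> chs A (ss @ [t])" by blast
  let ?X = "xs ! length ss"
  have "{} \<subset> ?X" "?X \<subset> A" "card ?X = t" using xs unfolding chs_def
    by (auto dest!: conjunct1[OF conjunct2] spec[of _ "length ss"])
  moreover have "finite ?X" using \<open>?X \<subset> A\<close> assms(1) finite_subset by blast
  ultimately have "0 < t" "t < card A" using assms(1)
    by (auto intro: psubset_card_mono simp: card_gt_0_iff)
  then show False using assms(2) by simp
qed

lemma chs_snoc:
  assumes "finite A" "0 < t" "t < card A"
  shows "chs A (ss @ [t]) = (\<Union>Y\<in>{Y. Y \<subseteq> A \<and> card Y = t}. (\<lambda>ys. ys @ [Y]) ` chs Y ss)"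
proof (intro equalityI subsetI)
  fix xs assume xs: "xs \<in> chs A (ss @ [t])"
  let ?L = "length ss"
  let ?Y = "xs ! ?L"
  have len: "length xs = Suc ?L" using xs by (simp add: chs_def)
  have P: "\<forall>j < Suc ?L. {} \<subset> xs ! j \<and> xs ! j \<subset> A \<and> card (xs ! j) = (ss @ [t]) ! j"
    "\<forall>j. Suc j < Suc ?L \<longrightarrow> xs ! j \<subset> xs ! Suc j"
    using xs by (auto simp: chs_def)
  have Y: "?Y \<subseteq> A" "card ?Y = t" using P(1)[rule_format, of ?L] by auto
  have eq: "xs = take ?L xs @ [?Y]" using take_Suc_conv_app_nth[of ?L xs] len by simp
  have "take ?L xs \<in> chs ?Y ss"
    unfolding chs_def
  proof (intro CollectI conjI allI impI)
    show "length (take ?L xs) = ?L" using len by simp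
  next
    fix j assume j: "j < ?L"
    have "{} \<subset> xs ! j \<and> xs ! j \<subset> A \<and> card (xs ! j) = (ss @ [t]) ! j" using P(1) j by simp
    moreover have "xs ! j \<subset> ?Y" using chain_trans[OF P(2) j] by simp
    ultimately show "{} \<subset> take ?L xs ! j" "take ?L xs ! j \<subset> ?Y" "card (take ?L xs ! j) = ss ! j"
      using j by (auto simp: nth_append)
  next
    fix j assume j: "Suc j < ?L"
    then show "take ?L xs ! j \<subset> take ?L xs ! Suc j" using P(2) by simp
  qed
  then show "xs \<in> (\<Union>Y\<in>{Y. Y \<subseteq> A \<and> card Y = t}. (\<lambda>ys. ys @ [Y]) ` chs Y ss)"
    using Y eq by blast
next
  fix xs assume "xs \<in> (\<Union>Y\<in>{Y. Y \<subseteq> A \<and> card Y = t}. (\<lambda>ys. ys @ [Y]) ` chs Y ss)"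
  then obtain Y ys where Y: "Y \<subseteq> A" "card Y = t" and ys: "ys \<in> chs Y ss" and xs: "xs = ys @ [Y]"
    by blast
  have fY: "finite Y" using Y(1) assms(1) finite_subset by blast
  have Yne: "{} \<subset> Y" using Y(2) assms(2) by auto
  have YA: "Y \<subset> A" using Y assms(3) by auto
  have lys: "length ys = length ss" and P: "\<forall>j < length ss. {} \<subset> ys ! j \<and> ys ! j \<subset> Y \<and> card (ys ! j) = ss ! j"
    "\<forall>j. Suc j < length ss \<longrightarrow> ys ! j \<subset> ys ! Suc j" using ys by (auto simp: chs_def)
  show "xs \<in> chs A (ss @ [t])"
    unfolding chs_def
  proof (intro CollectI conjI allI impI)
    show "length xs = length (ss @ [t])" using xs lys by simp
  next
    fix j assume j: "j < length (ss @ [t])"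
    show "{} \<subset> xs ! j" "xs ! j \<subset> A" "card (xs ! j) = (ss @ [t]) ! j"
    proof -
      have "({} \<subset> xs ! j \<and> xs ! j \<subset> A \<and> card (xs ! j) = (ss @ [t]) ! j)"
      proof (cases "j < length ss")
        case True then show ?thesis using P(1) xs lys YA by (auto simp: nth_append)
      next
        case False then have "j = length ss" using j by simp
        then show ?thesis using xs lys Yne YA Y by (simp add: nth_append)
      qed
      then show "{} \<subset> xs ! j" "xs ! j \<subset> A" "card (xs ! j) = (ss @ [t]) ! j" by auto
    qed
  next
    fix j assume j: "Suc j < length (ss @ [t])"
    show "xs ! j \<subset> xs ! Suc j"
    proof (cases "Suc j < length ss")
      case True then show ?thesis using P(2) xs lys by (simp add: nth_append)
    next
      case False then have "Suc j = length ss" using j by simp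
      then show ?thesis using P(1) xs lys by (simp add: nth_append)
    qed
  qed
qed

lemma chs_card: "finite A \<Longrightarrow> card (chs A ss) = fc (card A) (rev ss)"
proof (induction ss arbitrary: A rule: rev_induct)
  case Nil
  have "chs A [] = {[]}" by (auto simp: chs_def)
  then show ?case by simp
next
  case (snoc t ss)
  show ?case
  proof (cases "0 < t \<and> t < card A")
    case False then show ?thesis using chs_snoc_empty[OF snoc.prems False] by auto
  next
    case True
    let ?I = "{Y. Y \<subseteq> A \<and> card Y = t}"
    have fI: "finite ?I" by (rule finite_subset[of _ "Pow A"]) (use snoc.prems in auto)
    have fY: "\<And>Y. Y \<in> ?I \<Longrightarrow> finite Y" using snoc.prems finite_subset by blast
    have "card (chs A (ss @ [t])) = (\<Sum>Y\<in>?I. card ((\<lambda>ys. ys @ [Y]) ` chs Y ss))"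
      unfolding chs_snoc[OF snoc.prems True[THEN conjunct1] True[THEN conjunct2]]
      by (rule card_UN_disjoint) (auto intro!: chs_finite fY fI finite_imageI)
    also have "\<dots> = (\<Sum>Y\<in>?I. fc t (rev ss))"
    proof (rule sum.cong)
      fix Y assume Y: "Y \<in> ?I"
      have "card ((\<lambda>ys. ys @ [Y]) ` chs Y ss) = card (chs Y ss)"
        by (rule card_image) (simp add: inj_on_def)
      also have "\<dots> = fc t (rev ss)" using snoc.IH[OF fY[OF Y]] Y by simp
      finally show "card ((\<lambda>ys. ys @ [Y]) ` chs Y ss) = fc t (rev ss)" .
    qed simp
    also have "\<dots> = (card A choose t) * fc t (rev ss)" using n_subsets[OF snoc.prems, of t] by simp
    finally show ?thesis using True by simp
  qed
qed



lemma subseqs_snoc_sum: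
  "(\<Sum>ys\<leftarrow>subseqs (xs @ [x]). (f ys :: 'a::comm_monoid_add)) =
   (\<Sum>ys\<leftarrow>subseqs xs. f ys) + (\<Sum>ys\<leftarrow>subseqs xs. f (ys @ [x]))"
proof (induction xs arbitrary: f)
  case Nil then show ?case by (simp add: Let_def add.commute)
next
  case (Cons a xs)
  have "(\<Sum>ys\<leftarrow>subseqs ((a # xs) @ [x]). f ys) =
        (\<Sum>ys\<leftarrow>subseqs (xs @ [x]). f (a # ys)) + (\<Sum>ys\<leftarrow>subseqs (xs @ [x]). f ys)"
    by (simp add: Let_def comp_def)
  also have "\<dots> = ((\<Sum>ys\<leftarrow>subseqs xs. f (a # ys)) + (\<Sum>ys\<leftarrow>subseqs xs. f (a # ys @ [x])))
       + ((\<Sum>ys\<leftarrow>subseqs xs. f ys) + (\<Sum>ys\<leftarrow>subseqs xs. f (ys @ [x])))"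
    using Cons.IH[of "\<lambda>ys. f (a # ys)"] Cons.IH[of f] by simp
  also have "\<dots> = (\<Sum>ys\<leftarrow>subseqs (a # xs). f ys) + (\<Sum>ys\<leftarrow>subseqs (a # xs). f (ys @ [x]))"
    by (simp add: Let_def comp_def ac_simps)
  finally show ?case .
qed

definition P :: "nat \<Rightarrow> nat \<Rightarrow> int poly" where
  "P m s = (\<Prod>j\<in>{s..<m}. 1 - qq ^ Suc j)"

lemma W_Nil: "W m [] = P m 0"
  by (simp add: W_def P_def atLeast0LessThan)

lemma W_snoc:
  assumes "t < m" "\<forall>x\<in>set ss. x \<le> t"
  shows "W m (ss @ [Suc t]) = W t ss * qq ^ Suc t * P m (Suc t)"
proof -
  let ?f = "\<lambda>j. if Suc j \<in> set (ss @ [Suc t]) then qq ^ Suc j else 1 - qq ^ Suc j"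
  have "W m (ss @ [Suc t]) = prod ?f {0..<Suc t} * prod ?f {Suc t..<m}"
    unfolding W_def atLeast0LessThan[symmetric]
    by (rule prod.atLeastLessThan_concat[symmetric]) (use assms in auto)
  also have "prod ?f {0..<Suc t} = prod ?f {0..<t} * qq ^ Suc t" by simp
  also have "prod ?f {0..<t} = W t ss" unfolding W_def atLeast0LessThan[symmetric]
    by (rule prod.cong) auto
  also have "prod ?f {Suc t..<m} = P m (Suc t)" unfolding P_def
    by (rule prod.cong) (use assms in auto)
  finally show ?thesis by simp
qed

definition F :: "nat \<Rightarrow> int poly" where
  "F m = (\<Sum>ss\<leftarrow>subseqs [1..<Suc m]. of_nat (fc (Suc m) (rev ss)) * W m ss)"

lemma subseqs_set: "ss \<in> set (subseqs xs) \<Longrightarrow> set ss \<subseteq> set xs"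
  using subseqs_powset[of xs] by blast

lemma H_lemma:
  assumes "t \<le> m" "\<And>s. s < t \<Longrightarrow> F s = qfact (Suc s)"
  shows "(\<Sum>ss\<leftarrow>subseqs [1..<Suc t]. of_nat (fc (Suc m) (rev ss)) * W m ss)
        = (\<Sum>s\<le>t. of_nat (Suc m choose s) * qq ^ s * P m s * qfact s)"
  using assms
proof (induction t)
  case 0 then show ?case by (simp add: W_Nil qfact_def)
next
  case (Suc t)
  have IH: "(\<Sum>ss\<leftarrow>subseqs [1..<Suc t]. of_nat (fc (Suc m) (rev ss)) * W m ss)
        = (\<Sum>s\<le>t. of_nat (Suc m choose s) * qq ^ s * P m s * qfact s)"
    using Suc by simp
  have "(\<Sum>ss\<leftarrow>subseqs [1..<Suc t]. of_nat (fc (Suc m) (rev (ss @ [Suc t]))) * W m (ss @ [Suc t]))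
     = (\<Sum>ss\<leftarrow>subseqs [1..<Suc t]. (of_nat (Suc m choose Suc t) * qq ^ Suc t * P m (Suc t)) *
            (of_nat (fc (Suc t) (rev ss)) * W t ss))"
  proof (rule arg_cong[where f = sum_list], rule map_cong[OF refl])
    fix ss assume "ss \<in> set (subseqs [1..<Suc t])"
    then have "\<forall>x\<in>set ss. x \<le> t" using subseqs_set by fastforce
    then show "of_nat (fc (Suc m) (rev (ss @ [Suc t]))) * W m (ss @ [Suc t]) =
       (of_nat (Suc m choose Suc t) * qq ^ Suc t * P m (Suc t)) * (of_nat (fc (Suc t) (rev ss)) * W t ss)"
      using Suc.prems by (simp add: W_snoc algebra_simps)
  qed
  also have "\<dots> = of_nat (Suc m choose Suc t) * qq ^ Suc t * P m (Suc t) * F t"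
    unfolding F_def by (simp add: sum_list_const_mult)
  also have "F t = qfact (Suc t)" using Suc.prems by simp
  finally have "(\<Sum>ss\<leftarrow>subseqs [1..<Suc t]. of_nat (fc (Suc m) (rev (ss @ [Suc t]))) * W m (ss @ [Suc t]))
     = of_nat (Suc m choose Suc t) * qq ^ Suc t * P m (Suc t) * qfact (Suc t)" .
  then show ?case using IH by (simp add: subseqs_snoc_sum)
qed



lemma qq_ne1: "1 - qq \<noteq> 0"
proof
  assume "1 - qq = 0"
  then have "degree qq = degree (1::int poly)" by simp
  then show False by (simp add: qq_def degree_monom_eq)
qed

lemma qint_mult: "(1 - qq) * qint j = 1 - qq ^ j"
  unfolding qint_qq by (simp add: one_diff_power_eq)

lemma qfact_Suc: "qfact (Suc s) = qfact s * qint (Suc s)"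
  by (simp add: qfact_def)

lemma qfact0: "qfact 0 = 1" by (simp add: qfact_def)

definition Q :: "nat \<Rightarrow> int poly" where "Q s = (\<Prod>j<s. 1 - qq ^ Suc j)"

lemma Q_qfact: "(1 - qq) ^ s * qfact s = Q s"
proof (induction s)
  case 0 then show ?case by (simp add: qfact0 Q_def)
next
  case (Suc s)
  have "(1 - qq) ^ Suc s * qfact (Suc s) = ((1 - qq) ^ s * qfact s) * ((1 - qq) * qint (Suc s))"
    by (simp add: qfact_Suc algebra_simps)
  also have "\<dots> = Q s * (1 - qq ^ Suc s)" using Suc qint_mult by simp
  finally show ?case by (simp add: Q_def)
qed

lemma QP: "s \<le> m \<Longrightarrow> Q s * P m s = Q m"
  unfolding Q_def P_def atLeast0LessThan[symmetric] by (rule prod.atLeastLessThan_concat) auto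

lemma key_identity:
  "(\<Sum>s\<le>m. of_nat (Suc m choose s) * qq ^ s * P m s * qfact s) = qfact (Suc m)"
proof -
  let ?L = "(\<Sum>s\<le>m. of_nat (Suc m choose s) * qq ^ s * P m s * qfact s)"
  have "(1 - qq) ^ Suc m * ?L = (\<Sum>s\<le>m. of_nat (Suc m choose s) * qq ^ s * (1 - qq) ^ (Suc m - s) * ((1 - qq) ^ s * qfact s * P m s))"
    unfolding sum_distrib_left
  proof (rule sum.cong[OF refl])
    fix s assume "s \<in> {..m}"
    then have pe: "(1 - qq) ^ Suc m = (1 - qq) ^ (Suc m - s) * (1 - qq) ^ s"
      by (simp add: power_add[symmetric])
    show "(1 - qq) ^ Suc m * (of_nat (Suc m choose s) * qq ^ s * P m s * qfact s) =
         of_nat (Suc m choose s) * qq ^ s * (1 - qq) ^ (Suc m - s) * ((1 - qq) ^ s * qfact s * P m s)"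
      by (unfold pe) (simp only: mult_ac)
  qed
  also have "\<dots> = (\<Sum>s\<le>m. of_nat (Suc m choose s) * qq ^ s * (1 - qq) ^ (Suc m - s)) * Q m"
    unfolding sum_distrib_right by (rule sum.cong[OF refl]) (simp add: Q_qfact QP)
  also have "(\<Sum>s\<le>m. of_nat (Suc m choose s) * qq ^ s * (1 - qq) ^ (Suc m - s)) = 1 - qq ^ Suc m"
  proof -
    have "(qq + (1 - qq)) ^ Suc m = (\<Sum>s\<le>Suc m. of_nat (Suc m choose s) * qq ^ s * (1 - qq) ^ (Suc m - s))"
      by (rule binomial_ring)
    then have "1 = (\<Sum>s\<le>m. of_nat (Suc m choose s) * qq ^ s * (1 - qq) ^ (Suc m - s)) + qq ^ Suc m"
      by simp
    then show ?thesis by (simp add: algebra_simps)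
  qed
  also have "(1 - qq ^ Suc m) * Q m = (1 - qq) ^ Suc m * qfact (Suc m)"
  proof -
    have "(1 - qq) ^ Suc m * qfact (Suc m) = ((1 - qq) ^ m * qfact m) * ((1 - qq) * qint (Suc m))"
      by (simp add: qfact_Suc mult_ac)
    also have "\<dots> = Q m * (1 - qq ^ Suc m)" by (simp only: Q_qfact qint_mult)
    finally show ?thesis by (simp add: mult_ac)
  qed
  finally show ?thesis using qq_ne1 by simp
qed

lemma F_qfact: "F m = qfact (Suc m)"
proof (induction m rule: less_induct)
  case (less m)
  have "F m = (\<Sum>s\<le>m. of_nat (Suc m choose s) * qq ^ s * P m s * qfact s)"
    unfolding F_def by (rule H_lemma) (use less in auto)
  then show ?case by (simp add: key_identity)
qed

lemma Psi_Theta: "hom m (Psi_B (Suc m)) \<and> ThK 0 (Psi_B (Suc m)) = qfact (Suc m)"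
  using Psi_props[of "Suc m"] F_qfact[of m]
  by (simp add: F_def flag_chs chs_card)

lemma qint_double: "qint (2 * m) = qint m * (1 + qq ^ m)"
proof -
  have e: "qq ^ (2 * m) = qq ^ m * qq ^ m" by (simp add: mult_2 power_add)
  have "(1 - qq) * qint (2 * m) = (1 - qq) * (qint m * (1 + qq ^ m))"
    unfolding qint_mult mult.assoc[symmetric] e
    by (simp add: algebra_simps)
  then show ?thesis using qq_ne1 by simp
qed

lemma main_gen:
  "\<forall>n. 1 \<le> n \<and> i \<le> n - 1 \<longrightarrow> hom n (Phi_check n i) \<and>
     ThK 0 (Phi_check n i) = qq ^ i * qint (2 * (n - i)) * qfact (n - 1)"
proof (induction i)
  case 0
  show ?case
  proof (intro allI impI)
    fix n :: nat assume "1 \<le> n \<and> 0 \<le> n - 1"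
    then obtain m where n: "n = Suc m" by (cases n) auto
    have h: "hom m (Psi_B (Suc m))" and t: "ThK 0 (Psi_B (Suc m)) = qfact (Suc m)"
      using Psi_Theta by auto
    have "hom (m + 1) (nc_mult (Psi_B (Suc m)) nc_c)" by (rule hom_mult[OF h hom_c])
    moreover have "ThK 0 (nc_mult (Psi_B (Suc m)) nc_c) = qfact (Suc m) * (1 + qq ^ Suc m)"
      using ThK_mult[OF h] t by (simp add: ThK_c)
    ultimately show "hom n (Phi_check n 0) \<and>
        ThK 0 (Phi_check n 0) = qq ^ 0 * qint (2 * (n - 0)) * qfact (n - 1)"
      using qint_double[of "Suc m"] unfolding n by (simp add: qfact_Suc algebra_simps)
  qed
next
  case (Suc i)
  show ?case
  proof (intro allI impI)
    fix n :: nat assume a: "1 \<le> n \<and> Suc i \<le> n - 1"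
    then obtain m where n: "n = Suc m" and m: "1 \<le> m" "i \<le> m - 1" by (cases n) auto
    from Suc.IH m have IH: "hom m (Phi_check m i)"
      "ThK 0 (Phi_check m i) = qq ^ i * qint (2 * (m - i)) * qfact (m - 1)" by auto
    obtain k where k: "m = Suc k" using m by (cases m) auto
    have "Phi_check n (Suc i) = G (Phi_check m i)" by (simp add: n)
    moreover have "hom n (G (Phi_check m i))" using hom_G[OF IH(1)] n by simp
    moreover have "ThK 0 (G (Phi_check m i)) = qq ^ Suc i * qint (2 * (n - Suc i)) * qfact (n - 1)"
      using ThK_G[OF IH(1)] IH(2) by (simp add: n k qfact_Suc algebra_simps)
    ultimately show "hom n (Phi_check n (Suc i)) \<and>
       ThK 0 (Phi_check n (Suc i)) = qq ^ Suc i * qint (2 * (n - Suc i)) * qfact (n - 1)" by simp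
  qed
qed

theorem mainTheorem4:
  fixes n i :: nat
  assumes "1 \<le> n" and "i \<le> n - 1"
  shows "Theta (Phi_check n i) = monom 1 i * qint (2 * (n - i)) * qfact (n - 1)"
  using main_gen[of i] assms by (simp add: Theta_ThK monom_qq)

end
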